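(* Let $\varphi : X \to Y$ be a morphism in $\mathscr{C}$ with cokernel $\lambda : Y\to L$. Then $\varphi$ is $\{1,4\}$-invertible if and only if $\varphi$ is regular and $\lambda^{*}\lambda : L\to L$ is invertible. In this case, for every $\psi : Y\to X$ with $\varphi\psi\varphi=\varphi$, $$[1_Y-\lambda(\lambda^{*}\lambda)^{-1}\lambda^{*}]\,\psi$$ is a $\{1,4\}$-inverse of $\varphi$.
   Context: $\mathscr{C}$ is an additive category with an involution $*$: a map on morphisms sending $\varphi : X\to Y$ to $\varphi^* : Y \to X$ such that $(\varphi^* )^*=\varphi$, $(\varphi\psi)^*=\psi^*\varphi^*$ and $(\varphi+\phi)^*=\varphi^*+\phi^*$. Composition is written left to right: for $\varphi : X\to Y$ and $\psi : Y\to Z$, $\varphi\psi : X \to Z$ means "first $\varphi$, then $\psi$". A cokernel of $\varphi : X\to Y$ is a morphism $\lambda : Y\to L$ with $\varphi\lambda=0$ such that every $\beta : Y\to M$ with $\varphi\beta=0$ factors uniquely as $\beta=\lambda\beta'$. $\varphi$ is regular if there is $\chi : Y\to X$ with $\varphi\chi\varphi=\varphi$. A $\{1,4\}$-inverse of $\varphi$ is a morphism $\chi : Y\to X$ with $\varphi\chi\varphi=\varphi$ and $(\chi\varphi)^*=\chi\varphi$. A morphism is invertible if it has a two-sided inverse. *)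

theory Defs
  imports Main
begin

text \<open>An additive category with involution, represented explicitly.
  Composition is written left to right: comp f g means first f, then g.\<close>

record ('o, 'm) icat =
  Obj  :: "'o set"
  Mor  :: "'m set"
  dom  :: "'m \<Rightarrow> 'o"
  cod  :: "'m \<Rightarrow> 'o"
  comp :: "'m \<Rightarrow> 'm \<Rightarrow> 'm"
  idm  :: "'o \<Rightarrow> 'm"
  zer  :: "'o \<Rightarrow> 'o \<Rightarrow> 'm"
  plus :: "'m \<Rightarrow> 'm \<Rightarrow> 'm"
  neg  :: "'m \<Rightarrow> 'm"
  star :: "'m \<Rightarrow> 'm"

definition hom :: "('o, 'm) icat \<Rightarrow> 'o \<Rightarrow> 'o \<Rightarrow> 'm set" where
  "hom C X Y = {f \<in> Mor C. dom C f = X \<and> cod C f = Y}"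

definition category :: "('o, 'm) icat \<Rightarrow> bool" where
  "category C \<longleftrightarrow>
     (\<forall>f \<in> Mor C. dom C f \<in> Obj C \<and> cod C f \<in> Obj C) \<and>
     (\<forall>X \<in> Obj C. idm C X \<in> hom C X X) \<and>
     (\<forall>X \<in> Obj C. \<forall>Y \<in> Obj C. \<forall>Z \<in> Obj C. \<forall>f \<in> hom C X Y. \<forall>g \<in> hom C Y Z.
        comp C f g \<in> hom C X Z) \<and>
     (\<forall>X \<in> Obj C. \<forall>Y \<in> Obj C. \<forall>f \<in> hom C X Y.
        comp C (idm C X) f = f \<and> comp C f (idm C Y) = f) \<and>
     (\<forall>W \<in> Obj C. \<forall>X \<in> Obj C. \<forall>Y \<in> Obj C. \<forall>Z \<in> Obj C.
        \<forall>f \<in> hom C W X. \<forall>g \<in> hom C X Y. \<forall>h \<in> hom C Y Z.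
        comp C (comp C f g) h = comp C f (comp C g h))"

definition preadditive :: "('o, 'm) icat \<Rightarrow> bool" where
  "preadditive C \<longleftrightarrow> category C \<and>
     (\<forall>X \<in> Obj C. \<forall>Y \<in> Obj C.
        zer C X Y \<in> hom C X Y \<and>
        (\<forall>f \<in> hom C X Y. \<forall>g \<in> hom C X Y. plus C f g \<in> hom C X Y) \<and>
        (\<forall>f \<in> hom C X Y. neg C f \<in> hom C X Y) \<and>
        (\<forall>f \<in> hom C X Y. \<forall>g \<in> hom C X Y. \<forall>h \<in> hom C X Y.
            plus C (plus C f g) h = plus C f (plus C g h)) \<and>
        (\<forall>f \<in> hom C X Y. \<forall>g \<in> hom C X Y. plus C f g = plus C g f) \<and>
        (\<forall>f \<in> hom C X Y. plus C f (zer C X Y) = f) \<and>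
        (\<forall>f \<in> hom C X Y. plus C f (neg C f) = zer C X Y)) \<and>
     (\<forall>X \<in> Obj C. \<forall>Y \<in> Obj C. \<forall>Z \<in> Obj C.
        \<forall>f \<in> hom C X Y. \<forall>g \<in> hom C X Y. \<forall>h \<in> hom C Y Z.
          comp C (plus C f g) h = plus C (comp C f h) (comp C g h)) \<and>
     (\<forall>X \<in> Obj C. \<forall>Y \<in> Obj C. \<forall>Z \<in> Obj C.
        \<forall>f \<in> hom C X Y. \<forall>g \<in> hom C Y Z. \<forall>h \<in> hom C Y Z.
          comp C f (plus C g h) = plus C (comp C f g) (comp C f h))"

definition additive :: "('o, 'm) icat \<Rightarrow> bool" where
  "additive C \<longleftrightarrow> preadditive C \<and>
     (\<exists>Z \<in> Obj C. idm C Z = zer C Z Z) \<and>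
     (\<forall>X \<in> Obj C. \<forall>Y \<in> Obj C. \<exists>B \<in> Obj C.
        \<exists>i1 \<in> hom C X B. \<exists>i2 \<in> hom C Y B. \<exists>p1 \<in> hom C B X. \<exists>p2 \<in> hom C B Y.
          comp C i1 p1 = idm C X \<and> comp C i2 p2 = idm C Y \<and>
          comp C i1 p2 = zer C X Y \<and> comp C i2 p1 = zer C Y X \<and>
          plus C (comp C p1 i1) (comp C p2 i2) = idm C B)"

definition additive_inv_category :: "('o, 'm) icat \<Rightarrow> bool" where
  "additive_inv_category C \<longleftrightarrow> additive C \<and>
     (\<forall>X \<in> Obj C. \<forall>Y \<in> Obj C. \<forall>f \<in> hom C X Y. star C f \<in> hom C Y X \<and>
        star C (star C f) = f \<and>
        (\<forall>g \<in> hom C X Y. star C (plus C f g) = plus C (star C f) (star C g))) \<and>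
     (\<forall>X \<in> Obj C. \<forall>Y \<in> Obj C. \<forall>Z \<in> Obj C. \<forall>f \<in> hom C X Y. \<forall>g \<in> hom C Y Z.
        star C (comp C f g) = comp C (star C g) (star C f))"

definition minus :: "('o, 'm) icat \<Rightarrow> 'm \<Rightarrow> 'm \<Rightarrow> 'm" where
  "minus C f g = plus C f (neg C g)"

definition is_cokernel :: "('o, 'm) icat \<Rightarrow> 'm \<Rightarrow> 'm \<Rightarrow> bool" where
  "is_cokernel C f l \<longleftrightarrow> l \<in> Mor C \<and> dom C l = cod C f \<and>
     comp C f l = zer C (dom C f) (cod C l) \<and>
     (\<forall>M \<in> Obj C. \<forall>b \<in> hom C (cod C f) M.
        comp C f b = zer C (dom C f) M \<longrightarrow> (\<exists>!b'. b' \<in> hom C (cod C l) M \<and> b = comp C l b'))"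

definition regular :: "('o, 'm) icat \<Rightarrow> 'm \<Rightarrow> bool" where
  "regular C f \<longleftrightarrow> (\<exists>x \<in> hom C (cod C f) (dom C f). comp C (comp C f x) f = f)"

definition is_14_inverse :: "('o, 'm) icat \<Rightarrow> 'm \<Rightarrow> 'm \<Rightarrow> bool" where
  "is_14_inverse C f x \<longleftrightarrow> x \<in> hom C (cod C f) (dom C f) \<and>
     comp C (comp C f x) f = f \<and> star C (comp C x f) = comp C x f"

definition is_inverse_of :: "('o, 'm) icat \<Rightarrow> 'm \<Rightarrow> 'm \<Rightarrow> bool" where
  "is_inverse_of C f g \<longleftrightarrow> g \<in> hom C (cod C f) (dom C f) \<and>
     comp C f g = idm C (dom C f) \<and> comp C g f = idm C (cod C f)"

definition invertible :: "('o, 'm) icat \<Rightarrow> 'm \<Rightarrow> bool" where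
  "invertible C f \<longleftrightarrow> f \<in> Mor C \<and> (\<exists>g. is_inverse_of C f g)"

definition inverse :: "('o, 'm) icat \<Rightarrow> 'm \<Rightarrow> 'm" where
  "inverse C f = (THE g. is_inverse_of C f g)"

end

theory Submission
  imports Defs
begin

locale aic = fixes C :: "('o,'m) icat" assumes A: "additive_inv_category C"
begin

abbreviation cc (infixl "\<cdot>" 70) where "f \<cdot> g \<equiv> comp C f g"
abbreviation pp (infixl "\<oplus>" 65) where "f \<oplus> g \<equiv> plus C f g"
abbreviation mm (infixl "\<ominus>" 65) where "f \<ominus> g \<equiv> minus C f g"

lemma objs: "f \<in> hom C X Y \<Longrightarrow> X \<in> Obj C \<and> Y \<in> Obj C"
  using A unfolding additive_inv_category_def additive_def preadditive_def category_def hom_def by auto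

lemma CAT: "category C" using A unfolding additive_inv_category_def additive_def preadditive_def by simp
lemma PRE: "preadditive C" using A unfolding additive_inv_category_def additive_def by simp
lemma STAR: "(\<forall>X \<in> Obj C. \<forall>Y \<in> Obj C. \<forall>f \<in> hom C X Y. star C f \<in> hom C Y X \<and>
        star C (star C f) = f \<and>
        (\<forall>g \<in> hom C X Y. star C (plus C f g) = plus C (star C f) (star C g))) \<and>
     (\<forall>X \<in> Obj C. \<forall>Y \<in> Obj C. \<forall>Z \<in> Obj C. \<forall>f \<in> hom C X Y. \<forall>g \<in> hom C Y Z.
        star C (comp C f g) = comp C (star C g) (star C f))" using A unfolding additive_inv_category_def by simp
lemmas C1 = CAT[unfolded category_def, THEN conjunct2]
lemmas P1 = PRE[unfolded preadditive_def, THEN conjunct2]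
lemma comp_hom: "f \<in> hom C X Y \<Longrightarrow> g \<in> hom C Y Z \<Longrightarrow> f \<cdot> g \<in> hom C X Z"
  using C1 objs[of f X Y] objs[of g Y Z] by blast
lemma assoc: "f \<in> hom C W X \<Longrightarrow> g \<in> hom C X Y \<Longrightarrow> h \<in> hom C Y Z \<Longrightarrow> (f \<cdot> g) \<cdot> h = f \<cdot> (g \<cdot> h)"
  using C1 objs[of f W X] objs[of h Y Z] objs[of g X Y] by blast
lemma id_hom: "X \<in> Obj C \<Longrightarrow> idm C X \<in> hom C X X"
  using C1 by blast
lemma id_l: "f \<in> hom C X Y \<Longrightarrow> idm C X \<cdot> f = f"
  using C1 objs[of f X Y] by blast
lemma id_r: "f \<in> hom C X Y \<Longrightarrow> f \<cdot> idm C Y = f"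
  using C1 objs[of f X Y] by blast
lemma PG: assumes "X \<in> Obj C" "Y \<in> Obj C" shows
        "zer C X Y \<in> hom C X Y \<and>
        (\<forall>f \<in> hom C X Y. \<forall>g \<in> hom C X Y. plus C f g \<in> hom C X Y) \<and>
        (\<forall>f \<in> hom C X Y. neg C f \<in> hom C X Y) \<and>
        (\<forall>f \<in> hom C X Y. \<forall>g \<in> hom C X Y. \<forall>h \<in> hom C X Y.
            plus C (plus C f g) h = plus C f (plus C g h)) \<and>
        (\<forall>f \<in> hom C X Y. \<forall>g \<in> hom C X Y. plus C f g = plus C g f) \<and>
        (\<forall>f \<in> hom C X Y. plus C f (zer C X Y) = f) \<and>
        (\<forall>f \<in> hom C X Y. plus C f (neg C f) = zer C X Y)"
  using P1[THEN conjunct1] assms by blast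
lemma zer_hom: "X \<in> Obj C \<Longrightarrow> Y \<in> Obj C \<Longrightarrow> zer C X Y \<in> hom C X Y"
  using PG by blast
lemma plus_hom: "f \<in> hom C X Y \<Longrightarrow> g \<in> hom C X Y \<Longrightarrow> f \<oplus> g \<in> hom C X Y"
  using PG[of X Y] objs[of f X Y] by blast
lemma neg_hom: "f \<in> hom C X Y \<Longrightarrow> neg C f \<in> hom C X Y"
  using PG[of X Y] objs[of f X Y] by blast
lemma passoc: "f \<in> hom C X Y \<Longrightarrow> g \<in> hom C X Y \<Longrightarrow> h \<in> hom C X Y \<Longrightarrow> (f \<oplus> g) \<oplus> h = f \<oplus> (g \<oplus> h)"
  using PG[of X Y] objs[of f X Y] by blast
lemma pcomm: "f \<in> hom C X Y \<Longrightarrow> g \<in> hom C X Y \<Longrightarrow> f \<oplus> g = g \<oplus> f"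
  using PG[of X Y] objs[of f X Y] by blast
lemma pzero: "f \<in> hom C X Y \<Longrightarrow> f \<oplus> zer C X Y = f"
  using PG[of X Y] objs[of f X Y] by blast
lemma pneg: "f \<in> hom C X Y \<Longrightarrow> f \<oplus> neg C f = zer C X Y"
  using PG[of X Y] objs[of f X Y] by blast
lemma distr_r: "f \<in> hom C X Y \<Longrightarrow> g \<in> hom C X Y \<Longrightarrow> h \<in> hom C Y Z \<Longrightarrow> (f \<oplus> g) \<cdot> h = f \<cdot> h \<oplus> g \<cdot> h"
  using P1 objs[of f X Y] objs[of h Y Z] by blast
lemma distr_l: "f \<in> hom C X Y \<Longrightarrow> g \<in> hom C Y Z \<Longrightarrow> h \<in> hom C Y Z \<Longrightarrow> f \<cdot> (g \<oplus> h) = f \<cdot> g \<oplus> f \<cdot> h"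
  using P1 objs[of f X Y] objs[of h Y Z] by blast
lemma star_hom: "f \<in> hom C X Y \<Longrightarrow> star C f \<in> hom C Y X"
  using STAR objs[of f X Y] by blast
lemma star_star: "f \<in> hom C X Y \<Longrightarrow> star C (star C f) = f"
  using STAR objs[of f X Y] by blast
lemma star_plus: "f \<in> hom C X Y \<Longrightarrow> g \<in> hom C X Y \<Longrightarrow> star C (f \<oplus> g) = star C f \<oplus> star C g"
  using STAR objs[of f X Y] by blast
lemma star_comp: "f \<in> hom C X Y \<Longrightarrow> g \<in> hom C Y Z \<Longrightarrow> star C (f \<cdot> g) = star C g \<cdot> star C f"
  using STAR objs[of f X Y] objs[of g Y Z] by blast

lemma zplus: "f \<in> hom C X Y \<Longrightarrow> zer C X Y \<oplus> f = f"
proof -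
  assume f: "f \<in> hom C X Y"
  have z: "zer C X Y \<in> hom C X Y" using objs[OF f] zer_hom by blast
  show ?thesis using pcomm[OF z f] pzero[OF f] by simp
qed
lemma neg_unique: assumes "a \<in> hom C X Y" "b \<in> hom C X Y" "a \<oplus> b = zer C X Y" shows "b = neg C a"
proof -
  have n: "neg C a \<in> hom C X Y" using assms neg_hom by blast
  have "b = b \<oplus> (a \<oplus> neg C a)" using assms pneg pzero by simp
  also have "\<dots> = (b \<oplus> a) \<oplus> neg C a" using passoc[OF assms(2,1) n] by simp
  also have "\<dots> = neg C a" using assms pcomm[OF assms(1,2)] zplus[OF n] by simp
  finally show ?thesis .
qed
lemma idem_zero: assumes "a \<in> hom C X Y" "a \<oplus> a = a" shows "a = zer C X Y"
proof -
  have n: "neg C a \<in> hom C X Y" using assms neg_hom by blast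
  have "a = a \<oplus> (a \<oplus> neg C a)" using assms pneg pzero by simp
  also have "\<dots> = (a \<oplus> a) \<oplus> neg C a" using passoc[OF assms(1,1) n] by simp
  also have "\<dots> = zer C X Y" using assms pneg by simp
  finally show ?thesis .
qed
lemma comp_zer_r: assumes f: "f \<in> hom C X Y" and Z: "Z \<in> Obj C" shows "f \<cdot> zer C Y Z = zer C X Z"
proof -
  have z: "zer C Y Z \<in> hom C Y Z" using objs[OF f] Z zer_hom by blast
  have "f \<cdot> zer C Y Z \<oplus> f \<cdot> zer C Y Z = f \<cdot> zer C Y Z"
    using distr_l[OF f z z] pzero[OF z] by simp
  thus ?thesis using idem_zero comp_hom[OF f z] by blast
qed
lemma comp_zer_l: assumes f: "f \<in> hom C Y Z" and X: "X \<in> Obj C" shows "zer C X Y \<cdot> f = zer C X Z"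
proof -
  have z: "zer C X Y \<in> hom C X Y" using objs[OF f] X zer_hom by blast
  have "zer C X Y \<cdot> f \<oplus> zer C X Y \<cdot> f = zer C X Y \<cdot> f"
    using distr_r[OF z z f] pzero[OF z] by simp
  thus ?thesis using idem_zero comp_hom[OF z f] by blast
qed
lemma comp_neg_r: assumes f: "f \<in> hom C X Y" and g: "g \<in> hom C Y Z" shows "f \<cdot> neg C g = neg C (f \<cdot> g)"
proof -
  have n: "neg C g \<in> hom C Y Z" using g neg_hom by blast
  have "f \<cdot> g \<oplus> f \<cdot> neg C g = zer C X Z"
    using distr_l[OF f g n] pneg[OF g] comp_zer_r[OF f] objs[OF g] by simp
  thus ?thesis using neg_unique comp_hom[OF f g] comp_hom[OF f n] by blast
qed
lemma comp_neg_l: assumes f: "f \<in> hom C X Y" and g: "g \<in> hom C Y Z" shows "neg C f \<cdot> g = neg C (f \<cdot> g)"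
proof -
  have n: "neg C f \<in> hom C X Y" using f neg_hom by blast
  have "f \<cdot> g \<oplus> neg C f \<cdot> g = zer C X Z"
    using distr_r[OF f n g] pneg[OF f] comp_zer_l[OF g] objs[OF f] by simp
  thus ?thesis using neg_unique comp_hom[OF f g] comp_hom[OF n g] by blast
qed
lemma minus_hom: "f \<in> hom C X Y \<Longrightarrow> g \<in> hom C X Y \<Longrightarrow> f \<ominus> g \<in> hom C X Y"
  by (simp add: minus_def plus_hom neg_hom)
lemma minus_r: "f \<in> hom C X Y \<Longrightarrow> g \<in> hom C X Y \<Longrightarrow> h \<in> hom C Y Z \<Longrightarrow> (f \<ominus> g) \<cdot> h = f \<cdot> h \<ominus> g \<cdot> h"
  by (simp add: minus_def distr_r neg_hom comp_neg_l)
lemma minus_l: "f \<in> hom C X Y \<Longrightarrow> g \<in> hom C Y Z \<Longrightarrow> h \<in> hom C Y Z \<Longrightarrow> f \<cdot> (g \<ominus> h) = f \<cdot> g \<ominus> f \<cdot> h"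
  by (simp add: minus_def distr_l neg_hom comp_neg_r)
lemma minus_self: "f \<in> hom C X Y \<Longrightarrow> f \<ominus> f = zer C X Y"
  by (simp add: minus_def pneg)
lemma neg_zer: assumes "X \<in> Obj C" "Y \<in> Obj C" shows "neg C (zer C X Y) = zer C X Y"
proof -
  have z: "zer C X Y \<in> hom C X Y" using assms zer_hom by blast
  show ?thesis using neg_unique[OF z z] pzero[OF z] by simp
qed
lemma minus_zer: assumes f: "f \<in> hom C X Y" shows "f \<ominus> zer C X Y = f"
  using objs[OF f] neg_zer pzero[OF f] unfolding minus_def by simp
lemma star_zer: assumes "X \<in> Obj C" "Y \<in> Obj C" shows "star C (zer C X Y) = zer C Y X"
proof -
  have z: "zer C X Y \<in> hom C X Y" using assms zer_hom by blast
  have s: "star C (zer C X Y) \<in> hom C Y X" using star_hom[OF z] .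
  have "star C (zer C X Y) \<oplus> star C (zer C X Y) = star C (zer C X Y)"
    using star_plus[OF z z] pzero[OF z] by simp
  thus ?thesis using idem_zero[OF s] by blast
qed
lemma star_neg: assumes f: "f \<in> hom C X Y" shows "star C (neg C f) = neg C (star C f)"
proof -
  have n: "neg C f \<in> hom C X Y" using f neg_hom by blast
  have "star C f \<oplus> star C (neg C f) = zer C Y X"
    using star_plus[OF f n] pneg[OF f] star_zer objs[OF f] by simp
  thus ?thesis using neg_unique star_hom[OF f] star_hom[OF n] by blast
qed
lemma star_minus: "f \<in> hom C X Y \<Longrightarrow> g \<in> hom C X Y \<Longrightarrow> star C (f \<ominus> g) = star C f \<ominus> star C g"
  by (simp add: minus_def star_plus neg_hom star_neg)
lemma star_id: assumes X: "X \<in> Obj C" shows "star C (idm C X) = idm C X"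
proof -
  have i: "idm C X \<in> hom C X X" using id_hom[OF X] .
  have s: "star C (idm C X) \<in> hom C X X" using star_hom[OF i] .
  have "idm C X = star C (star C (idm C X))" using star_star[OF i] by simp
  also have "\<dots> = star C (star C (idm C X) \<cdot> idm C X)" using id_r[OF s] by simp
  also have "\<dots> = star C (idm C X) \<cdot> star C (star C (idm C X))" using star_comp[OF s i] by simp
  also have "\<dots> = star C (idm C X)" using star_star[OF i] id_r[OF s] by simp
  finally show ?thesis by simp
qed
lemma plus_minus: assumes a: "a \<in> hom C X Y" and b: "b \<in> hom C X Y" shows "a \<oplus> (b \<ominus> a) = b"
proof -
  have n: "neg C a \<in> hom C X Y" using a neg_hom by blast
  have "a \<oplus> (b \<ominus> a) = a \<oplus> (neg C a \<oplus> b)" unfolding minus_def using pcomm[OF b n] by simp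
  also have "\<dots> = (a \<oplus> neg C a) \<oplus> b" using passoc[OF a n b] by simp
  also have "\<dots> = b" using pneg[OF a] zplus[OF b] by simp
  finally show ?thesis .
qed


lemma homD: "f \<in> hom C X Y \<Longrightarrow> f \<in> Mor C \<and> dom C f = X \<and> cod C f = Y"
  unfolding hom_def by simp

lemma coker_zero: assumes ck: "is_cokernel C p l" and p: "p \<in> hom C X Y" and l: "l \<in> hom C Y L"
  shows "p \<cdot> l = zer C X L"
  using ck homD[OF p] homD[OF l] unfolding is_cokernel_def by simp

lemma coker_factor: assumes ck: "is_cokernel C p l" and p: "p \<in> hom C X Y" and l: "l \<in> hom C Y L"
  and b: "b \<in> hom C Y M" and pb: "p \<cdot> b = zer C X M"
  shows "\<exists>b'. b' \<in> hom C L M \<and> b = l \<cdot> b'"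
proof -
  have M: "M \<in> Obj C" using objs[OF b] by blast
  show ?thesis using ck homD[OF p] homD[OF l] M b pb unfolding is_cokernel_def by metis
qed

lemma coker_epi: assumes ck: "is_cokernel C p l" and p: "p \<in> hom C X Y" and l: "l \<in> hom C Y L"
  and a: "a \<in> hom C L M" and b: "b \<in> hom C L M" and e: "l \<cdot> a = l \<cdot> b"
  shows "a = b"
proof -
  have M: "M \<in> Obj C" using objs[OF b] by blast
  have la: "l \<cdot> a \<in> hom C Y M" using comp_hom[OF l a] .
  have "p \<cdot> (l \<cdot> a) = zer C X M"
    using assoc[OF p l a] coker_zero[OF ck p l] comp_zer_l[OF a] objs[OF p] by simp
  hence "\<exists>!b'. b' \<in> hom C (cod C l) M \<and> l \<cdot> a = l \<cdot> b'"
    using ck homD[OF p] homD[OF l] M la unfolding is_cokernel_def by metis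
  thus ?thesis using a b e homD[OF l] by blast
qed

lemma inv_unique: assumes "is_inverse_of C f g1" "is_inverse_of C f g2" "f \<in> hom C X Y"
  shows "g1 = g2"
proof -
  have h: "dom C f = X" "cod C f = Y" using homD[OF assms(3)] by auto
  have g1: "g1 \<in> hom C Y X" and g2: "g2 \<in> hom C Y X" using assms h unfolding is_inverse_of_def by auto
  have "g1 = g1 \<cdot> (f \<cdot> g2)" using assms h id_r[OF g1] unfolding is_inverse_of_def by simp
  also have "\<dots> = (g1 \<cdot> f) \<cdot> g2" using assoc[OF g1 assms(3) g2] by simp
  also have "\<dots> = g2" using assms h id_l[OF g2] unfolding is_inverse_of_def by simp
  finally show ?thesis .
qed

lemma formula:
  assumes ck: "is_cokernel C p l" and p: "p \<in> hom C X Y" and l: "l \<in> hom C Y L"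
    and q: "q \<in> hom C Y X" and pqp: "(p \<cdot> q) \<cdot> p = p"
    and gi: "is_inverse_of C (star C l \<cdot> l) g"
  shows "is_14_inverse C p ((idm C Y \<ominus> (l \<cdot> g) \<cdot> star C l) \<cdot> q)"
proof -
  have Xo: "X \<in> Obj C" and Yo: "Y \<in> Obj C" using objs[OF p] by auto
  have Lo: "L \<in> Obj C" using objs[OF l] by auto
  have ls: "star C l \<in> hom C L Y" using star_hom[OF l] .
  have sl: "star C l \<cdot> l \<in> hom C L L" using comp_hom[OF ls l] .
  have g: "g \<in> hom C L L" and gl: "g \<cdot> (star C l \<cdot> l) = idm C L" and lg: "(star C l \<cdot> l) \<cdot> g = idm C L"
    using gi homD[OF sl] unfolding is_inverse_of_def by auto
  define P where "P = (l \<cdot> g) \<cdot> star C l"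
  have lgh: "l \<cdot> g \<in> hom C Y L" using comp_hom[OF l g] .
  have P: "P \<in> hom C Y Y" unfolding P_def using comp_hom[OF lgh ls] .
  have I: "idm C Y \<in> hom C Y Y" using id_hom[OF Yo] .
  have IP: "idm C Y \<ominus> P \<in> hom C Y Y" using minus_hom[OF I P] .
  have chi: "(idm C Y \<ominus> P) \<cdot> q \<in> hom C Y X" using comp_hom[OF IP q] .
  have pl: "p \<cdot> l = zer C X L" using coker_zero[OF ck p l] .
  have pP: "p \<cdot> P = zer C X Y"
  proof -
    have "p \<cdot> P = ((p \<cdot> l) \<cdot> g) \<cdot> star C l" unfolding P_def
      using assoc[OF p l g] assoc[OF p lgh ls] by simp
    also have "\<dots> = zer C X Y" using pl comp_zer_l[OF g Xo] comp_zer_l[OF ls Xo] by simp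
    finally show ?thesis .
  qed
  have pIP: "p \<cdot> (idm C Y \<ominus> P) = p"
    using minus_l[OF p I P] id_r[OF p] pP minus_zer[OF p] by simp
  have c1: "(p \<cdot> ((idm C Y \<ominus> P) \<cdot> q)) \<cdot> p = p"
    using assoc[OF p IP q] pIP pqp by simp
  have qp: "q \<cdot> p \<in> hom C Y Y" using comp_hom[OF q p] .
  have Iqp: "idm C Y \<ominus> q \<cdot> p \<in> hom C Y Y" using minus_hom[OF I qp] .
  have "p \<cdot> (idm C Y \<ominus> q \<cdot> p) = zer C X Y"
    using minus_l[OF p I qp] id_r[OF p] assoc[OF p q p] pqp minus_self[OF p] by simp
  then obtain b where b: "b \<in> hom C L Y" and bb: "idm C Y \<ominus> q \<cdot> p = l \<cdot> b"
    using coker_factor[OF ck p l Iqp] by blast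
  have Pl: "P \<cdot> l = l"
  proof -
    have "P \<cdot> l = l \<cdot> (g \<cdot> (star C l \<cdot> l))" unfolding P_def
      using assoc[OF lgh ls l] assoc[OF l g sl] by simp
    thus ?thesis using gl id_r[OF l] by simp
  qed
  have IPl: "(idm C Y \<ominus> P) \<cdot> l = zer C Y L"
    using minus_r[OF I P l] id_l[OF l] Pl minus_self[OF l] by simp
  have IPb: "(idm C Y \<ominus> P) \<cdot> (idm C Y \<ominus> q \<cdot> p) = zer C Y Y"
    using bb assoc[OF IP l b] IPl comp_zer_l[OF b Yo] by simp
  have "(idm C Y \<ominus> P) = (idm C Y \<ominus> P) \<cdot> (q \<cdot> p \<oplus> (idm C Y \<ominus> q \<cdot> p))"
    using plus_minus[OF qp I] id_r[OF IP] by simp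
  also have "\<dots> = (idm C Y \<ominus> P) \<cdot> (q \<cdot> p) \<oplus> zer C Y Y"
    using distr_l[OF IP qp Iqp] IPb by simp
  also have "\<dots> = ((idm C Y \<ominus> P) \<cdot> q) \<cdot> p"
    using pzero comp_hom[OF IP qp] assoc[OF IP q p] by simp
  finally have c2: "((idm C Y \<ominus> P) \<cdot> q) \<cdot> p = idm C Y \<ominus> P" by simp
  have sg: "star C g \<in> hom C L L" using star_hom[OF g] .
  have ssl: "star C (star C l \<cdot> l) = star C l \<cdot> l"
    using star_comp[OF ls l] star_star[OF l] by simp
  have inv2: "is_inverse_of C (star C l \<cdot> l) (star C g)"
  proof -
    have "(star C l \<cdot> l) \<cdot> star C g = idm C L"
      using star_comp[OF g sl] ssl gl star_id[OF Lo] by simp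
    moreover have "star C g \<cdot> (star C l \<cdot> l) = idm C L"
      using star_comp[OF sl g] ssl lg star_id[OF Lo] by simp
    ultimately show ?thesis unfolding is_inverse_of_def using homD[OF sl] sg by simp
  qed
  have gg: "star C g = g" using inv_unique[OF inv2 gi sl] .
  have sP: "star C P = P"
  proof -
    have "star C P = star C (star C l) \<cdot> star C (l \<cdot> g)"
      unfolding P_def using star_comp[OF lgh ls] by simp
    also have "\<dots> = l \<cdot> (g \<cdot> star C l)" using star_star[OF l] star_comp[OF l g] gg by simp
    also have "\<dots> = P" unfolding P_def using assoc[OF l g ls] by simp
    finally show ?thesis .
  qed
  have c3: "star C (idm C Y \<ominus> P) = idm C Y \<ominus> P"
    using star_minus[OF I P] star_id[OF Yo] sP by simp
  show ?thesis unfolding is_14_inverse_def P_def[symmetric]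
    using homD[OF p] chi c1 c2 c3 by simp
qed

lemma forward:
  assumes ck: "is_cokernel C p l" and p: "p \<in> hom C X Y" and l: "l \<in> hom C Y L"
    and x: "is_14_inverse C p x"
  shows "invertible C (star C l \<cdot> l)"
proof -
  have Xo: "X \<in> Obj C" and Yo: "Y \<in> Obj C" using objs[OF p] by auto
  have Lo: "L \<in> Obj C" using objs[OF l] by auto
  have xh: "x \<in> hom C Y X" and pxp: "(p \<cdot> x) \<cdot> p = p" and xps: "star C (x \<cdot> p) = x \<cdot> p"
    using x homD[OF p] unfolding is_14_inverse_def by auto
  define e where "e = x \<cdot> p"
  have eh: "e \<in> hom C Y Y" unfolding e_def using comp_hom[OF xh p] .
  have I: "idm C Y \<in> hom C Y Y" using id_hom[OF Yo] .
  have Ie: "idm C Y \<ominus> e \<in> hom C Y Y" using minus_hom[OF I eh] .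
  have pl: "p \<cdot> l = zer C X L" using coker_zero[OF ck p l] .
  have "p \<cdot> (idm C Y \<ominus> e) = zer C X Y"
    unfolding e_def using minus_l[OF p I eh[unfolded e_def]] id_r[OF p] assoc[OF p xh p] pxp minus_self[OF p] by simp
  then obtain b where b: "b \<in> hom C L Y" and bb: "idm C Y \<ominus> e = l \<cdot> b"
    using coker_factor[OF ck p l Ie] by blast
  have el: "e \<cdot> l = zer C Y L"
    unfolding e_def using assoc[OF xh p l] pl comp_zer_r[OF xh Lo] by simp
  have Iel: "(idm C Y \<ominus> e) \<cdot> l = l"
    using minus_r[OF I eh l] id_l[OF l] el minus_zer[OF l] by simp
  have Ll: "idm C L \<in> hom C L L" using id_hom[OF Lo] .
  have bl: "b \<cdot> l = idm C L"
  proof (rule coker_epi[OF ck p l comp_hom[OF b l] Ll])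
    show "l \<cdot> (b \<cdot> l) = l \<cdot> idm C L"
      using assoc[OF l b l] bb Iel id_r[OF l] by simp
  qed
  have es: "star C e = e" unfolding e_def using xps .
  have sIe: "star C (idm C Y \<ominus> e) = idm C Y \<ominus> e"
    using star_minus[OF I eh] star_id[OF Yo] es by simp
  have ls: "star C l \<in> hom C L Y" using star_hom[OF l] .
  have sb: "star C b \<in> hom C Y L" using star_hom[OF b] .
  have sl: "star C l \<cdot> l \<in> hom C L L" using comp_hom[OF ls l] .
  have bsb: "b \<cdot> star C b \<in> hom C L L" using comp_hom[OF b sb] .
  have sbsl: "star C b \<cdot> star C l = idm C Y \<ominus> e"
    using star_comp[OF l b] bb sIe by simp
  have k: "b \<cdot> ((idm C Y \<ominus> e) \<cdot> l) = idm C L" using Iel bl by simp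
  have i1: "(star C l \<cdot> l) \<cdot> (b \<cdot> star C b) = idm C L"
  proof -
    have "(star C l \<cdot> l) \<cdot> (b \<cdot> star C b) = star C l \<cdot> ((idm C Y \<ominus> e) \<cdot> star C b)"
      using assoc[OF ls l bsb] assoc[OF l b sb] bb by simp
    also have "\<dots> = star C (b \<cdot> ((idm C Y \<ominus> e) \<cdot> l))"
      using star_comp[OF b comp_hom[OF Ie l]] star_comp[OF Ie l] sIe assoc[OF ls Ie sb] by simp
    also have "\<dots> = idm C L" using k star_id[OF Lo] by simp
    finally show ?thesis .
  qed
  have i2: "(b \<cdot> star C b) \<cdot> (star C l \<cdot> l) = idm C L"
  proof -
    have "(b \<cdot> star C b) \<cdot> (star C l \<cdot> l) = b \<cdot> ((star C b \<cdot> star C l) \<cdot> l)"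
      using assoc[OF b sb sl] assoc[OF sb ls l] by simp
    thus ?thesis using sbsl k by simp
  qed
  show ?thesis unfolding invertible_def is_inverse_of_def
    using homD[OF sl] bsb i1 i2 by auto
qed

end

theorem lemma3p2:
  fixes C :: "('o, 'm) icat"
  assumes cat: "additive_inv_category C"
    and XY: "X \<in> Obj C" "Y \<in> Obj C" "L \<in> Obj C"
    and phi: "\<phi> \<in> hom C X Y"
    and lamh: "lam \<in> hom C Y L"
    and coker: "is_cokernel C \<phi> lam"
  shows "((\<exists>\<chi>. is_14_inverse C \<phi> \<chi>) \<longleftrightarrow>
           (regular C \<phi> \<and> invertible C (comp C (star C lam) lam))) \<and>
         ((\<exists>\<chi>. is_14_inverse C \<phi> \<chi>) \<longrightarrow>
           (\<forall>\<psi> \<in> hom C Y X. comp C (comp C \<phi> \<psi>) \<phi> = \<phi> \<longrightarrow>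
             is_14_inverse C \<phi>
               (comp C (minus C (idm C Y)
                   (comp C (comp C lam (inverse C (comp C (star C lam) lam))) (star C lam)))
                 \<psi>)))"
proof -
  interpret aic C using cat by unfold_locales
  have hp: "dom C \<phi> = X" "cod C \<phi> = Y" using homD[OF phi] by auto
  have ls: "star C lam \<in> hom C L Y" using star_hom[OF lamh] .
  have sl: "comp C (star C lam) lam \<in> hom C L L" using comp_hom[OF ls lamh] .
  have form: "is_14_inverse C \<phi>
               (comp C (minus C (idm C Y)
                   (comp C (comp C lam (inverse C (comp C (star C lam) lam))) (star C lam)))
                 \<psi>)"
    if inv: "invertible C (comp C (star C lam) lam)" and q: "\<psi> \<in> hom C Y X"
      and pqp: "comp C (comp C \<phi> \<psi>) \<phi> = \<phi>" for \<psi>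
  proof -
    obtain g where gi: "is_inverse_of C (comp C (star C lam) lam) g"
      using inv unfolding invertible_def by blast
    have "inverse C (comp C (star C lam) lam) = g"
      unfolding inverse_def using gi inv_unique[OF _ _ sl] by blast
    thus ?thesis using formula[OF coker phi lamh q pqp gi] by simp
  qed
  have fwd: "invertible C (comp C (star C lam) lam)" if "is_14_inverse C \<phi> \<chi>" for \<chi>
    using forward[OF coker phi lamh that] .
  have reg: "regular C \<phi>" if "is_14_inverse C \<phi> \<chi>" for \<chi>
    using that unfolding regular_def is_14_inverse_def by blast
  have bwd: "\<exists>\<chi>. is_14_inverse C \<phi> \<chi>"
    if rg: "regular C \<phi>" and iv: "invertible C (comp C (star C lam) lam)"
  proof -
    obtain x where x: "x \<in> hom C Y X" "comp C (comp C \<phi> x) \<phi> = \<phi>"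
      using rg unfolding regular_def hp by blast
    show ?thesis using form[OF iv x] by blast
  qed
  show ?thesis using fwd reg bwd form by blast
qed

end
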